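(* (a) If $\chi,\chi'\in M_{\mathbb{R}}$ differ by a real multiple of $\tau_d$, then $(r,p)(\chi)=(r,p)(\chi')$. (b) Let $\chi\in M$ be a weight, let $w\in\mathfrak{S}_d$, and let $\delta\in M_{\mathbb{R}}^{\mathfrak{S}_d}$ be a Weyl-invariant real weight. Then \[(r,p)(\chi+\rho+\delta)=(r,p)(w*\chi+\rho+\delta),\] where $w*\chi:=w(\chi+\rho)-\rho$.
   Context: Let $Q=(I,E)$ be a symmetric quiver (for all $i,j\in I$ the number of arrows $i\to j$ equals the number of arrows $j\to i$), with source and target maps $s,t:E\to I$. Fix $d=(d_i)_{i\in I}\in\mathbb{N}^I$. Let $R(d)=\bigoplus_{a\in E}\mathrm{Hom}(\mathbb{C}^{d_{s(a)}},\mathbb{C}^{d_{t(a)}})$ with $G(d)=\prod_{i\in I}GL(d_i)$ acting by conjugation. Standing assumption: the subquiver $Q^d$ of $Q$ with vertex set $\{i\in I: d_i\neq 0\}$ is connected and is not the quiver with one vertex and no arrows. Let $T(d)$ be the diagonal maximal torus, with weight lattice $M=\bigoplus_{i\in I,1\le j\le d_i}\mathbb{Z}\beta^i_j$ and $M_{\mathbb{R}}=M\otimes\mathbb{R}$. Let $\mathcal{W}$ be the multiset of $T(d)$-weights of $R(d)$: for each arrow $a:i\to j$ and each $1\le x\le d_i$, $1\le y\le d_j$, the weight $\beta^j_y-\beta^i_x$. Let $\tau_d:=\big(\sum_{i,j}\beta^i_j\big)/\big(\sum_i d_i\big)$. Define the region $\mathbb{W}:=\sum_{\beta\in\mathcal{W}}[0,\beta]+\mathbb{R}\tau_d\subset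 M_{\mathbb{R}}$ (Minkowski sum, one segment for each element of the multiset). For $\chi\in M_{\mathbb{R}}$, the $r$-invariant $r(\chi)$ is the smallest real $r\ge 0$ with $\chi\in r\mathbb{W}$. If $r(\chi)=r$, then $\chi=\sum_{\beta\in\mathcal{W}}c_\beta\beta+c\tau_d$ with $c\in\mathbb{R}$ and $-r\le c_\beta\le 0$ (one coefficient for each element of the multiset); the $p$-invariant $p(\chi)$ is the smallest number of coefficients $c_\beta$ equal to $-r$ among all such expressions, and $(r,p)(\chi):=(r(\chi),p(\chi))$. The Weyl group $\mathfrak{S}_d=\prod_{i\in I}\mathfrak{S}_{d_i}$ acts on $M_{\mathbb{R}}$ by $w\cdot\beta^i_j=\beta^i_{w^i(j)}$; $M_{\mathbb{R}}^{\mathfrak{S}_d}$ denotes the invariants. The positive roots of $G(d)$ are $\beta^i_a-\beta^i_b$ for $i\in I$ and $a<b$, and $\rho$ is half their sum. *)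

theory Defs
  imports Complex_Main "HOL-Combinatorics.Permutations"
begin

text \<open>A quiver is given by a finite vertex set I, a finite arrow set E and
source/target maps s, t. A real weight in M_R is a function on the index set
of basis vectors beta^i_j (i in I, 1 <= j <= d i), extended by zero.\<close>

definition Bidx :: "'v set \<Rightarrow> ('v \<Rightarrow> nat) \<Rightarrow> ('v \<times> nat) set" where
  "Bidx I d = {(i, j). i \<in> I \<and> 1 \<le> j \<and> j \<le> d i}"

definition MR :: "'v set \<Rightarrow> ('v \<Rightarrow> nat) \<Rightarrow> ('v \<times> nat \<Rightarrow> real) set" where
  "MR I d = {\<chi>. \<forall>k. k \<notin> Bidx I d \<longrightarrow> \<chi> k = 0}"

definition Mlat :: "'v set \<Rightarrow> ('v \<Rightarrow> nat) \<Rightarrow> ('v \<times> nat \<Rightarrow> real) set" where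
  "Mlat I d = {\<chi> \<in> MR I d. \<forall>k. \<chi> k \<in> \<int>}"

definition beta :: "'v \<Rightarrow> nat \<Rightarrow> ('v \<times> nat \<Rightarrow> real)" where
  "beta i j = (\<lambda>k. if k = (i, j) then 1 else 0)"

text \<open>Index set of the multiset of T(d)-weights of R(d).\<close>
definition Widx :: "'e set \<Rightarrow> ('e \<Rightarrow> 'v) \<Rightarrow> ('e \<Rightarrow> 'v) \<Rightarrow> ('v \<Rightarrow> nat) \<Rightarrow> ('e \<times> nat \<times> nat) set" where
  "Widx E s t d = {(a, x, y). a \<in> E \<and> 1 \<le> x \<and> x \<le> d (s a) \<and> 1 \<le> y \<and> y \<le> d (t a)}"

definition wt :: "('e \<Rightarrow> 'v) \<Rightarrow> ('e \<Rightarrow> 'v) \<Rightarrow> 'e \<times> nat \<times> nat \<Rightarrow> ('v \<times> nat \<Rightarrow> real)" where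
  "wt s t w = (case w of (a, x, y) \<Rightarrow> (\<lambda>k. beta (t a) y k - beta (s a) x k))"

definition tau :: "'v set \<Rightarrow> ('v \<Rightarrow> nat) \<Rightarrow> ('v \<times> nat \<Rightarrow> real)" where
  "tau I d = (\<lambda>k. (\<Sum>(i, j)\<in>Bidx I d. beta i j k) / real (\<Sum>i\<in>I. d i))"

definition Wreg :: "'v set \<Rightarrow> 'e set \<Rightarrow> ('e \<Rightarrow> 'v) \<Rightarrow> ('e \<Rightarrow> 'v) \<Rightarrow> ('v \<Rightarrow> nat)
    \<Rightarrow> ('v \<times> nat \<Rightarrow> real) set" where
  "Wreg I E s t d = {\<chi>. \<exists>c c0. (\<forall>x\<in>Widx E s t d. 0 \<le> c x \<and> c x \<le> 1) \<and>
      \<chi> = (\<lambda>k. (\<Sum>x\<in>Widx E s t d. c x * wt s t x k) + c0 * tau I d k)}"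

definition r_inv :: "'v set \<Rightarrow> 'e set \<Rightarrow> ('e \<Rightarrow> 'v) \<Rightarrow> ('e \<Rightarrow> 'v) \<Rightarrow> ('v \<Rightarrow> nat)
    \<Rightarrow> ('v \<times> nat \<Rightarrow> real) \<Rightarrow> real" where
  "r_inv I E s t d \<chi> = Inf {r. 0 \<le> r \<and> \<chi> \<in> (\<lambda>\<psi>. (\<lambda>k. r * \<psi> k)) ` Wreg I E s t d}"

definition p_inv :: "'v set \<Rightarrow> 'e set \<Rightarrow> ('e \<Rightarrow> 'v) \<Rightarrow> ('e \<Rightarrow> 'v) \<Rightarrow> ('v \<Rightarrow> nat)
    \<Rightarrow> ('v \<times> nat \<Rightarrow> real) \<Rightarrow> nat" where
  "p_inv I E s t d \<chi> = (let r = r_inv I E s t d \<chi> in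
     (LEAST n. \<exists>c c0. (\<forall>x\<in>Widx E s t d. - r \<le> c x \<and> c x \<le> 0) \<and>
        \<chi> = (\<lambda>k. (\<Sum>x\<in>Widx E s t d. c x * wt s t x k) + c0 * tau I d k) \<and>
        n = card {x\<in>Widx E s t d. c x = - r}))"

definition rp :: "'v set \<Rightarrow> 'e set \<Rightarrow> ('e \<Rightarrow> 'v) \<Rightarrow> ('e \<Rightarrow> 'v) \<Rightarrow> ('v \<Rightarrow> nat)
    \<Rightarrow> ('v \<times> nat \<Rightarrow> real) \<Rightarrow> real \<times> nat" where
  "rp I E s t d \<chi> = (r_inv I E s t d \<chi>, p_inv I E s t d \<chi>)"

definition weyl :: "'v set \<Rightarrow> ('v \<Rightarrow> nat) \<Rightarrow> ('v \<Rightarrow> nat \<Rightarrow> nat) set" where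
  "weyl I d = {w. \<forall>i\<in>I. w i permutes {1..d i}}"

text \<open>w . beta^i_j = beta^i_{w_i(j)}, extended linearly.\<close>
definition weyl_act :: "('v \<Rightarrow> nat \<Rightarrow> nat) \<Rightarrow> ('v \<times> nat \<Rightarrow> real) \<Rightarrow> ('v \<times> nat \<Rightarrow> real)" where
  "weyl_act w \<chi> = (\<lambda>(i, j). \<chi> (i, inv (w i) j))"

definition rho :: "'v set \<Rightarrow> ('v \<Rightarrow> nat) \<Rightarrow> ('v \<times> nat \<Rightarrow> real)" where
  "rho I d = (\<lambda>k. (1/2) * (\<Sum>i\<in>I. \<Sum>(a, b)\<in>{(a, b). 1 \<le> a \<and> a < b \<and> b \<le> d i}.
      beta i a k - beta i b k))"

definition dot_act :: "'v set \<Rightarrow> ('v \<Rightarrow> nat) \<Rightarrow> ('v \<Rightarrow> nat \<Rightarrow> nat) \<Rightarrow> ('v \<times> nat \<Rightarrow> real)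
    \<Rightarrow> ('v \<times> nat \<Rightarrow> real)" where
  "dot_act I d w \<chi> = (\<lambda>k. weyl_act w (\<lambda>k'. \<chi> k' + rho I d k') k - rho I d k)"

definition symmetric_quiver :: "'v set \<Rightarrow> 'e set \<Rightarrow> ('e \<Rightarrow> 'v) \<Rightarrow> ('e \<Rightarrow> 'v) \<Rightarrow> bool" where
  "symmetric_quiver I E s t \<longleftrightarrow> finite I \<and> finite E \<and> s ` E \<subseteq> I \<and> t ` E \<subseteq> I \<and>
     (\<forall>i\<in>I. \<forall>j\<in>I. card {a\<in>E. s a = i \<and> t a = j} = card {a\<in>E. s a = j \<and> t a = i})"

definition standing_assumption :: "'v set \<Rightarrow> 'e set \<Rightarrow> ('e \<Rightarrow> 'v) \<Rightarrow> ('e \<Rightarrow> 'v) \<Rightarrow> ('v \<Rightarrow> nat) \<Rightarrow> bool" where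
  "standing_assumption I E s t d \<longleftrightarrow>
    (let V = {i\<in>I. d i \<noteq> 0}; A = {a\<in>E. s a \<in> V \<and> t a \<in> V};
         R = {(s a, t a) | a. a \<in> A} \<union> {(t a, s a) | a. a \<in> A} in
     V \<noteq> {} \<and> (\<forall>i\<in>V. \<forall>j\<in>V. (i, j) \<in> R\<^sup>*) \<and> \<not> (card V = 1 \<and> A = {}))"

end

theory Submission
  imports Defs
begin

lemma Bidx_Sigma: "Bidx I d = Sigma I (\<lambda>i. {1..d i})"
  by (auto simp: Bidx_def)

lemma tau_alt: "finite I \<Longrightarrow> tau I d k = (if k \<in> Bidx I d then 1 else 0) / real (\<Sum>i\<in>I. d i)"
proof -
  assume fI: "finite I"
  have fB: "finite (Bidx I d)" using fI by (simp add: Bidx_Sigma)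
  have e: "(\<lambda>(i,j). beta i j k) = (\<lambda>p. if k = p then (1::real) else 0)"
    by (auto simp: beta_def)
  show ?thesis unfolding tau_def e using fB by simp
qed

lemma weyl_perm: "w \<in> weyl I d \<Longrightarrow> i \<in> I \<Longrightarrow> w i permutes {1..d i}"
  by (simp add: weyl_def)

lemma tau_inv:
  assumes "w \<in> weyl I d" "finite I"
  shows "tau I d (i, inv (w i) j) = tau I d (i, j)"
proof -
  have "(i, inv (w i) j) \<in> Bidx I d \<longleftrightarrow> (i, j) \<in> Bidx I d"
  proof (cases "i \<in> I")
    case True
    have p: "inv (w i) permutes {1..d i}" using permutes_inv weyl_perm[OF assms(1) True] by blast
    show ?thesis using permutes_in_image[OF p, of j] True by (auto simp: Bidx_def)
  qed (auto simp: Bidx_def)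
  then show ?thesis using assms(2) by (simp add: tau_alt)
qed

definition rw :: "('v \<Rightarrow> nat \<Rightarrow> nat) \<Rightarrow> ('e \<Rightarrow> 'v) \<Rightarrow> ('e \<Rightarrow> 'v) \<Rightarrow> 'e \<times> nat \<times> nat \<Rightarrow> 'e \<times> nat \<times> nat" where
  "rw w s t = (\<lambda>(a, x, y). (a, inv (w (s a)) x, inv (w (t a)) y))"

lemma rw_bij:
  assumes "s ` E \<subseteq> I" "t ` E \<subseteq> I" "w \<in> weyl I d"
  shows "bij_betw (rw w s t) (Widx E s t d) (Widx E s t d)"
proof (rule bij_betwI[where g = "\<lambda>(a, x, y). (a, w (s a) x, w (t a) y)"])
  have P: "\<And>a. a \<in> E \<Longrightarrow> w (s a) permutes {1..d (s a)} \<and> w (t a) permutes {1..d (t a)}"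
  proof -
    fix a assume "a \<in> E"
    then have "s a \<in> I" "t a \<in> I" using assms(1,2) by auto
    then show "w (s a) permutes {1..d (s a)} \<and> w (t a) permutes {1..d (t a)}"
      using weyl_perm[OF assms(3)] by blast
  qed
  have Q: "\<And>a. a \<in> E \<Longrightarrow> inv (w (s a)) permutes {1..d (s a)} \<and> inv (w (t a)) permutes {1..d (t a)}"
    using P permutes_inv by blast
  show "rw w s t \<in> Widx E s t d \<rightarrow> Widx E s t d"
  proof
    fix z assume z: "z \<in> Widx E s t d"
    obtain a x y where zz: "z = (a, x, y)" by (cases z) auto
    have a: "a \<in> E" "x \<in> {1..d (s a)}" "y \<in> {1..d (t a)}" using z zz by (auto simp: Widx_def)
    show "rw w s t z \<in> Widx E s t d"
      using a Q[OF a(1)] permutes_in_image[of "inv (w (s a))" "{1..d (s a)}" x]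
        permutes_in_image[of "inv (w (t a))" "{1..d (t a)}" y]
      by (auto simp: zz rw_def Widx_def)
  qed
  show "(\<lambda>(a, x, y). (a, w (s a) x, w (t a) y)) \<in> Widx E s t d \<rightarrow> Widx E s t d"
  proof
    fix z assume z: "z \<in> Widx E s t d"
    obtain a x y where zz: "z = (a, x, y)" by (cases z) auto
    have a: "a \<in> E" "x \<in> {1..d (s a)}" "y \<in> {1..d (t a)}" using z zz by (auto simp: Widx_def)
    show "(\<lambda>(a, x, y). (a, w (s a) x, w (t a) y)) z \<in> Widx E s t d"
      using a P[OF a(1)] permutes_in_image[of "w (s a)" "{1..d (s a)}" x]
        permutes_in_image[of "w (t a)" "{1..d (t a)}" y]
      by (auto simp: zz Widx_def)
  qed
  have R: "\<And>a x. a \<in> E \<Longrightarrow> w (s a) (inv (w (s a)) x) = x \<and> inv (w (s a)) (w (s a) x) = x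
     \<and> w (t a) (inv (w (t a)) x) = x \<and> inv (w (t a)) (w (t a) x) = x"
    using P permutes_inverses by metis
  fix z
  show "z \<in> Widx E s t d \<Longrightarrow> (case rw w s t z of (a, x, y) \<Rightarrow> (a, w (s a) x, w (t a) y)) = z"
    using R by (auto simp: rw_def Widx_def)
  show "z \<in> Widx E s t d \<Longrightarrow> rw w s t ((case z of (a, x, y) \<Rightarrow> (a, w (s a) x, w (t a) y))) = z"
    using R by (auto simp: rw_def Widx_def)
qed

lemma wt_rw:
  assumes "s ` E \<subseteq> I" "t ` E \<subseteq> I" "w \<in> weyl I d" "z \<in> Widx E s t d"
  shows "wt s t (rw w s t z) (i, inv (w i) j) = wt s t z (i, j)"
proof -
  obtain a x y where zz: "z = (a, x, y)" by (cases z) auto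
  have a: "a \<in> E" using assms(4) zz by (auto simp: Widx_def)
  have P: "inj (inv (w (s a)))" "inj (inv (w (t a)))"
  proof -
    have "s a \<in> I" "t a \<in> I" using assms(1,2) a by auto
    then have "inv (w (s a)) permutes {1..d (s a)}" "inv (w (t a)) permutes {1..d (t a)}"
      using weyl_perm[OF assms(3)] permutes_inv by blast+
    then show "inj (inv (w (s a)))" "inj (inv (w (t a)))" using permutes_inj by blast+
  qed
  have 1: "beta (t a) (inv (w (t a)) y) (i, inv (w i) j) = beta (t a) y (i, j)"
    using P(2) by (auto simp: beta_def dest: injD)
  have 2: "beta (s a) (inv (w (s a)) x) (i, inv (w i) j) = beta (s a) x (i, j)"
    using P(1) by (auto simp: beta_def dest: injD)
  show ?thesis using 1 2 by (simp add: zz rw_def wt_def)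
qed

definition ex :: "'v set \<Rightarrow> 'e set \<Rightarrow> ('e \<Rightarrow> 'v) \<Rightarrow> ('e \<Rightarrow> 'v) \<Rightarrow> ('v \<Rightarrow> nat)
    \<Rightarrow> ('e \<times> nat \<times> nat \<Rightarrow> real) \<Rightarrow> real \<Rightarrow> ('v \<times> nat \<Rightarrow> real)" where
  "ex I E s t d c c0 = (\<lambda>k. (\<Sum>x\<in>Widx E s t d. c x * wt s t x k) + c0 * tau I d k)"

lemma Wreg_ex: "Wreg I E s t d = {ex I E s t d c c0 | c c0. \<forall>x\<in>Widx E s t d. 0 \<le> c x \<and> c x \<le> 1}"
  unfolding Wreg_def ex_def by blast

lemma core:
  fixes I :: "'v set"
  assumes "s ` E \<subseteq> I" "t ` E \<subseteq> I" "w \<in> weyl I d" "finite I"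
  shows "weyl_act w (ex I E s t d c c0) = ex I E s t d (\<lambda>x. c (rw w s t x)) c0"
proof (rule ext)
  fix k :: "'v \<times> nat"
  obtain i j where k: "k = (i, j)" by (cases k)
  have b: "bij_betw (rw w s t) (Widx E s t d) (Widx E s t d)" using rw_bij[OF assms(1-3)] .
  have "weyl_act w (ex I E s t d c c0) k
      = (\<Sum>x\<in>Widx E s t d. c x * wt s t x (i, inv (w i) j)) + c0 * tau I d (i, inv (w i) j)"
    by (simp add: weyl_act_def ex_def k)
  also have "(\<Sum>x\<in>Widx E s t d. c x * wt s t x (i, inv (w i) j))
     = (\<Sum>x\<in>Widx E s t d. c (rw w s t x) * wt s t (rw w s t x) (i, inv (w i) j))"
    using sum.reindex_bij_betw[OF b, of "\<lambda>x. c x * wt s t x (i, inv (w i) j)"] by simp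
  also have "\<dots> = (\<Sum>x\<in>Widx E s t d. c (rw w s t x) * wt s t x (i, j))"
    using wt_rw[OF assms(1-3)] by (intro sum.cong) auto
  finally show "weyl_act w (ex I E s t d c c0) k = ex I E s t d (\<lambda>x. c (rw w s t x)) c0 k"
    using tau_inv[OF assms(3,4)] by (simp add: ex_def k)
qed

lemma weyl_scale: "weyl_act w (\<lambda>k. r * f k) = (\<lambda>k. r * weyl_act w f k)"
  by (auto simp: weyl_act_def)

lemma weyl_S:
  assumes "s ` E \<subseteq> I" "t ` E \<subseteq> I" "w \<in> weyl I d" "finite I"
    and "\<chi> \<in> (\<lambda>\<psi>. (\<lambda>k. r * \<psi> k)) ` Wreg I E s t d"
  shows "weyl_act w \<chi> \<in> (\<lambda>\<psi>. (\<lambda>k. r * \<psi> k)) ` Wreg I E s t d"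
proof -
  obtain c c0 where c: "\<forall>x\<in>Widx E s t d. 0 \<le> c x \<and> c x \<le> 1"
    and ch: "\<chi> = (\<lambda>k. r * ex I E s t d c c0 k)"
    using assms(5) unfolding Wreg_ex by blast
  have b: "bij_betw (rw w s t) (Widx E s t d) (Widx E s t d)" using rw_bij[OF assms(1-3)] .
  have c': "\<forall>x\<in>Widx E s t d. 0 \<le> c (rw w s t x) \<and> c (rw w s t x) \<le> 1"
    using c bij_betwE[OF b] by blast
  have "weyl_act w \<chi> = (\<lambda>k. r * ex I E s t d (\<lambda>x. c (rw w s t x)) c0 k)"
    unfolding ch weyl_scale core[OF assms(1-4)] ..
  moreover have "ex I E s t d (\<lambda>x. c (rw w s t x)) c0 \<in> Wreg I E s t d"
    unfolding Wreg_ex using c' by blast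
  ultimately show ?thesis by blast
qed

definition Nset where
  "Nset I E s t d \<chi> r = {n. \<exists>c c0. (\<forall>x\<in>Widx E s t d. - r \<le> c x \<and> c x \<le> 0) \<and>
        \<chi> = (\<lambda>k. (\<Sum>x\<in>Widx E s t d. c x * wt s t x k) + c0 * tau I d k) \<and>
        n = card {x\<in>Widx E s t d. c x = - r}}"

definition Sset where
  "Sset I E s t d \<chi> = {r. 0 \<le> r \<and> \<chi> \<in> (\<lambda>\<psi>. (\<lambda>k. r * \<psi> k)) ` Wreg I E s t d}"

lemma rp_alt: "rp I E s t d \<chi> = (Inf (Sset I E s t d \<chi>),
   (LEAST n. n \<in> Nset I E s t d \<chi> (Inf (Sset I E s t d \<chi>))))"
  unfolding rp_def r_inv_def p_inv_def Nset_def Sset_def Let_def by simp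

lemma weyl_N:
  assumes "s ` E \<subseteq> I" "t ` E \<subseteq> I" "w \<in> weyl I d" "finite I"
    and "n \<in> Nset I E s t d \<chi> r"
  shows "n \<in> Nset I E s t d (weyl_act w \<chi>) r"
proof -
  obtain c c0 where c: "\<forall>x\<in>Widx E s t d. - r \<le> c x \<and> c x \<le> 0"
    and ch: "\<chi> = ex I E s t d c c0" and n: "n = card {x\<in>Widx E s t d. c x = - r}"
    using assms(5) unfolding Nset_def ex_def by blast
  have b: "bij_betw (rw w s t) (Widx E s t d) (Widx E s t d)" using rw_bij[OF assms(1-3)] .
  have c': "\<forall>x\<in>Widx E s t d. - r \<le> c (rw w s t x) \<and> c (rw w s t x) \<le> 0"
    using c bij_betwE[OF b] by blast
  have im: "rw w s t ` {x\<in>Widx E s t d. c (rw w s t x) = - r} = {x\<in>Widx E s t d. c x = - r}"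
  proof (intro equalityI subsetI)
    fix y assume "y \<in> rw w s t ` {x\<in>Widx E s t d. c (rw w s t x) = - r}"
    then show "y \<in> {x\<in>Widx E s t d. c x = - r}" using bij_betwE[OF b] by auto
  next
    fix y assume y: "y \<in> {x\<in>Widx E s t d. c x = - r}"
    then obtain x where "x \<in> Widx E s t d" "y = rw w s t x"
      using bij_betw_imp_surj_on[OF b] by (metis (no_types, lifting) imageE mem_Collect_eq)
    then show "y \<in> rw w s t ` {x\<in>Widx E s t d. c (rw w s t x) = - r}" using y by auto
  qed
  have "bij_betw (rw w s t) {x\<in>Widx E s t d. c (rw w s t x) = - r} {x\<in>Widx E s t d. c x = - r}"
    by (rule bij_betw_subset[OF b _ im]) blast
  then have n': "n = card {x\<in>Widx E s t d. c (rw w s t x) = - r}"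
    using n bij_betw_same_card[of "rw w s t"] by simp
  have "weyl_act w \<chi> = ex I E s t d (\<lambda>x. c (rw w s t x)) c0"
    unfolding ch core[OF assms(1-4)] ..
  then have "weyl_act w \<chi> = (\<lambda>k. (\<Sum>x\<in>Widx E s t d. c (rw w s t x) * wt s t x k) + c0 * tau I d k)"
    by (simp add: ex_def)
  then show ?thesis unfolding Nset_def mem_Collect_eq
    using c' n' by (intro exI[of _ "\<lambda>x. c (rw w s t x)"] exI[of _ c0]) simp
qed

lemma weyl_back:
  fixes I :: "'a set"
  assumes "w \<in> weyl I d" "\<chi> \<in> MR I d"
  shows "(\<lambda>i. if i \<in> I then inv (w i) else id) \<in> weyl I d"
    and "weyl_act (\<lambda>i. if i \<in> I then inv (w i) else id) (weyl_act w \<chi>) = \<chi>"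
proof -
  show "(\<lambda>i. if i \<in> I then inv (w i) else id) \<in> weyl I d"
    using assms(1) permutes_inv by (auto simp: weyl_def)
  show "weyl_act (\<lambda>i. if i \<in> I then inv (w i) else id) (weyl_act w \<chi>) = \<chi>"
  proof (rule ext)
    fix k :: "'a \<times> nat"
    obtain i j where k: "k = (i, j)" by (cases k)
    show "weyl_act (\<lambda>i. if i \<in> I then inv (w i) else id) (weyl_act w \<chi>) k = \<chi> k"
    proof (cases "i \<in> I")
      case True
      then have p: "w i permutes {1..d i}" using assms(1) by (simp add: weyl_def)
      have "inv (inv (w i)) j = w i j"
        using inv_inv_eq[OF permutes_bij[OF p]] by simp
      then show ?thesis using True p by (simp add: weyl_act_def k permutes_inverses)
    next
      case False
      then show ?thesis using assms(2) by (simp add: weyl_act_def k MR_def Bidx_def)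
    qed
  qed
qed

lemma weyl_rp:
  assumes "s ` E \<subseteq> I" "t ` E \<subseteq> I" "w \<in> weyl I d" "finite I" "\<chi> \<in> MR I d"
  shows "rp I E s t d (weyl_act w \<chi>) = rp I E s t d \<chi>"
proof -
  define w' where "w' = (\<lambda>i. if i \<in> I then inv (w i) else id)"
  have w': "w' \<in> weyl I d" "weyl_act w' (weyl_act w \<chi>) = \<chi>"
    using weyl_back[OF assms(3,5)] unfolding w'_def by auto
  have S: "Sset I E s t d (weyl_act w \<chi>) = Sset I E s t d \<chi>"
    using weyl_S[OF assms(1-4), of \<chi>] weyl_S[OF assms(1,2) w'(1) assms(4), of "weyl_act w \<chi>"] w'(2)
    unfolding Sset_def by auto
  have N: "\<And>r. Nset I E s t d (weyl_act w \<chi>) r = Nset I E s t d \<chi> r"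
  proof (intro equalityI subsetI)
    fix r n assume "n \<in> Nset I E s t d (weyl_act w \<chi>) r"
    then show "n \<in> Nset I E s t d \<chi> r"
      using weyl_N[OF assms(1,2) w'(1) assms(4), of n "weyl_act w \<chi>" r] w'(2) by simp
  next
    fix r n assume "n \<in> Nset I E s t d \<chi> r"
    then show "n \<in> Nset I E s t d (weyl_act w \<chi>) r"
      using weyl_N[OF assms(1-4), of n \<chi> r] by simp
  qed
  show ?thesis unfolding rp_alt S N ..
qed

lemma Inf_between:
  fixes S :: "real set"
  assumes "{0<..} \<subseteq> S" "S \<subseteq> {0..}"
  shows "Inf S = 0"
proof (cases "0 \<in> S")
  case True
  have "S = {0..}"
  proof (intro equalityI subsetI)
    fix x assume "x \<in> {0::real..}"
    then show "x \<in> S" using True assms(1) by (cases "x = 0") auto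
  qed (use assms(2) in auto)
  then show ?thesis by simp
next
  case False
  have "S = {0<..}"
  proof (intro equalityI subsetI)
    fix x assume "x \<in> S"
    then show "x \<in> {0::real<..}" using False assms(2) by (cases "x = 0") auto
  qed (use assms(1) in auto)
  then show ?thesis by simp
qed

lemma inf_eq:
  fixes S1 S2 :: "real set"
  assumes "S1 \<subseteq> {0..}" "S2 \<subseteq> {0..}" "\<And>r. r > 0 \<Longrightarrow> r \<in> S1 \<longleftrightarrow> r \<in> S2"
    and "0 \<in> S1 \<or> 0 \<in> S2 \<Longrightarrow> {0<..} \<subseteq> S1"
  shows "Inf S1 = Inf S2"
proof (cases "0 \<in> S1 \<or> 0 \<in> S2")
  case True
  then have a: "{0<..} \<subseteq> S1" using assms(4) by blast
  then have "{0<..} \<subseteq> S2" using assms(3) by auto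
  then show ?thesis using a assms Inf_between by metis
next
  case False
  have "S1 = S2"
  proof (intro equalityI subsetI)
    fix r assume "r \<in> S1" then show "r \<in> S2" using False assms(1) assms(3)[of r] by force
  next
    fix r assume "r \<in> S2" then show "r \<in> S1" using False assms(2) assms(3)[of r] by force
  qed
  then show ?thesis by simp
qed

lemma shift_S:
  assumes "r > 0" "\<chi> \<in> (\<lambda>\<psi>. (\<lambda>k. r * \<psi> k)) ` Wreg I E s t d"
  shows "(\<lambda>k. \<chi> k + c * tau I d k) \<in> (\<lambda>\<psi>. (\<lambda>k. r * \<psi> k)) ` Wreg I E s t d"
proof -
  obtain c1 c0 where c: "\<forall>x\<in>Widx E s t d. 0 \<le> c1 x \<and> c1 x \<le> 1"
    and ch: "\<chi> = (\<lambda>k. r * ex I E s t d c1 c0 k)"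
    using assms(2) unfolding Wreg_ex by blast
  have "(\<lambda>k. \<chi> k + c * tau I d k) = (\<lambda>k. r * ex I E s t d c1 (c0 + c / r) k)"
    using assms(1) by (auto simp: ch ex_def field_simps)
  moreover have "ex I E s t d c1 (c0 + c / r) \<in> Wreg I E s t d"
    unfolding Wreg_ex using c by blast
  ultimately show ?thesis by blast
qed

lemma zero_S:
  assumes "0 \<in> Sset I E s t d \<chi>"
  shows "\<chi> = (\<lambda>k. 0)"
  using assms unfolding Sset_def by auto

lemma tau_S:
  assumes "r > 0"
  shows "(\<lambda>k. c * tau I d k) \<in> (\<lambda>\<psi>. (\<lambda>k. r * \<psi> k)) ` Wreg I E s t d"
proof -
  have "(\<lambda>k. c * tau I d k) = (\<lambda>k. r * ex I E s t d (\<lambda>_. 0) (c / r) k)"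
    using assms by (auto simp: ex_def)
  moreover have "ex I E s t d (\<lambda>_. 0) (c / r) \<in> Wreg I E s t d"
    unfolding Wreg_ex by force
  ultimately show ?thesis by blast
qed

lemma shift_N:
  assumes "n \<in> Nset I E s t d \<chi> r"
  shows "n \<in> Nset I E s t d (\<lambda>k. \<chi> k + c * tau I d k) r"
proof -
  obtain c1 c0 where c: "\<forall>x\<in>Widx E s t d. - r \<le> c1 x \<and> c1 x \<le> 0"
    and ch: "\<chi> = ex I E s t d c1 c0" and n: "n = card {x\<in>Widx E s t d. c1 x = - r}"
    using assms unfolding Nset_def ex_def by blast
  have "(\<lambda>k. \<chi> k + c * tau I d k) = (\<lambda>k. (\<Sum>x\<in>Widx E s t d. c1 x * wt s t x k) + (c0 + c) * tau I d k)"
    by (auto simp: ch ex_def algebra_simps)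
  then show ?thesis unfolding Nset_def mem_Collect_eq
    using c n by (intro exI[of _ c1] exI[of _ "c0 + c"]) simp
qed

lemma shift_rp:
  shows "rp I E s t d (\<lambda>k. \<chi> k + c * tau I d k) = rp I E s t d \<chi>"
proof -
  let ?S1 = "Sset I E s t d (\<lambda>k. \<chi> k + c * tau I d k)" and ?S2 = "Sset I E s t d \<chi>"
  have bk: "(\<lambda>k. (\<chi> k + c * tau I d k) + (- c) * tau I d k) = \<chi>" by auto
  have S: "Inf ?S1 = Inf ?S2"
  proof (rule inf_eq)
    show "?S1 \<subseteq> {0..}" "?S2 \<subseteq> {0..}" unfolding Sset_def by auto
    fix r :: real assume r: "r > 0"
    show "r \<in> ?S1 \<longleftrightarrow> r \<in> ?S2"
      using shift_S[OF r, of \<chi> I E s t d c] shift_S[OF r, of "\<lambda>k. \<chi> k + c * tau I d k" I E s t d "- c"]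
        bk r unfolding Sset_def by auto
  next
    assume "0 \<in> ?S1 \<or> 0 \<in> ?S2"
    then show "{0<..} \<subseteq> ?S1"
    proof
      assume "0 \<in> ?S1"
      then have "(\<lambda>k. \<chi> k + c * tau I d k) = (\<lambda>k. 0)" by (rule zero_S)
      then show ?thesis using tau_S[of _ 0 I d E s t] unfolding Sset_def by auto
    next
      assume "0 \<in> ?S2"
      then have "\<chi> = (\<lambda>k. 0)" by (rule zero_S)
      then show ?thesis using tau_S[of _ c I d E s t] unfolding Sset_def by auto
    qed
  qed
  have N: "\<And>r. Nset I E s t d (\<lambda>k. \<chi> k + c * tau I d k) r = Nset I E s t d \<chi> r"
  proof (intro equalityI subsetI)
    fix r n assume "n \<in> Nset I E s t d (\<lambda>k. \<chi> k + c * tau I d k) r"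
    then show "n \<in> Nset I E s t d \<chi> r"
      using shift_N[of n I E s t d "\<lambda>k. \<chi> k + c * tau I d k" r "- c"] bk by simp
  next
    fix r n assume "n \<in> Nset I E s t d \<chi> r"
    then show "n \<in> Nset I E s t d (\<lambda>k. \<chi> k + c * tau I d k) r"
      using shift_N by metis
  qed
  show ?thesis unfolding rp_alt S N ..
qed

lemma rho_MR: "rho I d \<in> MR I d"
proof -
  have "rho I d k = 0" if k: "k \<notin> Bidx I d" for k
  proof -
    have "\<And>i a b. i \<in> I \<Longrightarrow> 1 \<le> a \<Longrightarrow> a < b \<Longrightarrow> b \<le> d i \<Longrightarrow> beta i a k - beta i b k = (0::real)"
      using k by (auto simp: beta_def Bidx_def)
    then show ?thesis unfolding rho_def
      by (auto intro!: sum.neutral)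
  qed
  then show ?thesis by (simp add: MR_def)
qed

theorem proposition3p1:
  fixes I :: "'v set" and E :: "'e set" and s t :: "'e \<Rightarrow> 'v" and d :: "'v \<Rightarrow> nat"
  assumes "symmetric_quiver I E s t"
    and "standing_assumption I E s t d"
  shows "(\<forall>\<chi> \<chi>' (c::real). \<chi> \<in> MR I d \<and> \<chi>' \<in> MR I d \<and> \<chi>' = (\<lambda>k. \<chi> k + c * tau I d k)
            \<longrightarrow> rp I E s t d \<chi> = rp I E s t d \<chi>')
       \<and> (\<forall>\<chi> w \<delta>. \<chi> \<in> Mlat I d \<and> w \<in> weyl I d \<and> \<delta> \<in> MR I d \<and>
            (\<forall>w'\<in>weyl I d. weyl_act w' \<delta> = \<delta>)
            \<longrightarrow> rp I E s t d (\<lambda>k. \<chi> k + rho I d k + \<delta> k)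
              = rp I E s t d (\<lambda>k. dot_act I d w \<chi> k + rho I d k + \<delta> k))"
proof (intro conjI allI impI)
  fix \<chi> \<chi>' :: "'v \<times> nat \<Rightarrow> real" and c :: real
  assume "\<chi> \<in> MR I d \<and> \<chi>' \<in> MR I d \<and> \<chi>' = (\<lambda>k. \<chi> k + c * tau I d k)"
  then show "rp I E s t d \<chi> = rp I E s t d \<chi>'" using shift_rp by metis
next
  fix \<chi> \<delta> :: "'v \<times> nat \<Rightarrow> real" and w
  assume h: "\<chi> \<in> Mlat I d \<and> w \<in> weyl I d \<and> \<delta> \<in> MR I d \<and> (\<forall>w'\<in>weyl I d. weyl_act w' \<delta> = \<delta>)"
  have q: "finite I" "s ` E \<subseteq> I" "t ` E \<subseteq> I" using assms(1) by (auto simp: symmetric_quiver_def)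
  have w: "w \<in> weyl I d" using h by blast
  have dl: "weyl_act w \<delta> = \<delta>" using h by blast
  have F: "(\<lambda>k. \<chi> k + rho I d k + \<delta> k) \<in> MR I d"
    using h rho_MR[of I d] by (auto simp: Mlat_def MR_def)
  have eq: "(\<lambda>k. dot_act I d w \<chi> k + rho I d k + \<delta> k) = weyl_act w (\<lambda>k. \<chi> k + rho I d k + \<delta> k)"
  proof (rule ext)
    fix k :: "'v \<times> nat"
    obtain i j where k: "k = (i, j)" by (cases k)
    have "\<delta> (i, j) = \<delta> (i, inv (w i) j)" using fun_cong[OF dl, of "(i, j)"] by (simp add: weyl_act_def)
    then show "dot_act I d w \<chi> k + rho I d k + \<delta> k = weyl_act w (\<lambda>k. \<chi> k + rho I d k + \<delta> k) k"
      by (simp add: k dot_act_def weyl_act_def)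
  qed
  show "rp I E s t d (\<lambda>k. \<chi> k + rho I d k + \<delta> k) = rp I E s t d (\<lambda>k. dot_act I d w \<chi> k + rho I d k + \<delta> k)"
    unfolding eq using weyl_rp[OF q(2,3) w q(1) F] by simp
qed

end
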